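(* There exist constants $K,k,D>0$ such that for all positive integers $n\ge m$ there exists an indexed family $\mathcal F=(f_1,\dots,f_T)$ of functions $f_i\colon\mathbb B^n\to\mathbb B^m$ with $T\le K\,2^m n^k$ having the following property: for every $b\in\mathbb B^m$ and every set of indices $I\subseteq\{1,\dots,T\}$ with $\#I\ge T/2$, $$\#\{a\in\mathbb B^n : f_i(a)\ne b \text{ for all } i\in I\}\le D\cdot 2^m.$$
   Context: $\mathbb B^k$ denotes the set of binary strings of length $k$. *)

theory Defs
  imports Complex_Main
begin

definition bstr :: "nat \<Rightarrow> bool list set" where
  "bstr k = {xs. length xs = k}"

end

theory Submission
  imports Defs "HOL-Library.FuncSet"
begin

lemma card_bstr: "card (bstr k) = 2 ^ k"
proof -
  have "bstr k = {xs. set xs \<subseteq> (UNIV::bool set) \<and> length xs = k}"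
    by (auto simp: bstr_def)
  then show ?thesis using card_lists_length_eq[of "UNIV::bool set" k] by simp
qed

lemma finite_bstr: "finite (bstr k)"
proof -
  have "bstr k = {xs. set xs \<subseteq> (UNIV::bool set) \<and> length xs = k}"
    by (auto simp: bstr_def)
  then show ?thesis using finite_lists_length_eq[of "UNIV::bool set" k] by simp
qed

lemma aux_pow: "(x::nat) ^ j * (x + j) \<le> x * (x + 1) ^ j"
proof (induction j)
  case 0 then show ?case by simp
next
  case (Suc j)
  have "x ^ Suc j * (x + Suc j) = x * (x ^ j * (x + j)) + x * x ^ j" by (simp add: algebra_simps)
  also have "\<dots> \<le> x ^ j * (x + j) * (x + 1)" by (simp add: algebra_simps)
  also have "\<dots> \<le> x * (x + 1) ^ j * (x + 1)" using mult_right_mono[OF Suc.IH, of "x+1"] by simp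
  finally show ?case by (simp add: algebra_simps)
qed

lemma two_pow_le: assumes N1: "N \<ge> 1" shows "2 * ((N::nat) - 1) ^ N \<le> N ^ N"
proof (cases "N \<le> 1")
  case True then have "N = 1" using N1 by simp then show ?thesis by simp
next
  case False
  define x where "x = N - 1"
  have x1: "x \<ge> 1" and N: "N = x + 1" using False by (auto simp: x_def)
  have "x ^ (x+1) * (x + (x+1)) \<le> x * (x + 1) ^ (x+1)" by (rule aux_pow)
  hence "x * (x ^ x * (2*x+1)) \<le> x * (x + 1) ^ (x+1)" by (simp add: algebra_simps)
  hence a: "x ^ x * (2*x+1) \<le> (x + 1) ^ (x+1)" using x1 by simp
  have "2 * x ^ (x+1) \<le> x ^ x * (2*x+1)" by (simp add: algebra_simps)
  from order_trans[OF this a] show ?thesis by (simp add: N)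
qed

lemma key_count:
  fixes n m :: nat
  assumes m: "0 < m" "m \<le> n"
  defines "N \<equiv> (2::nat) ^ m"
  defines "T \<equiv> 4 * n * N"
  defines "s \<equiv> 8 * N"
  defines "Dom \<equiv> {1..T} \<times> bstr n"
  defines "\<Omega> \<equiv> PiE Dom (\<lambda>_. bstr m)"
  defines "S \<equiv> (\<lambda>(b, I, A). PiE Dom (\<lambda>(i,a). if i \<in> I \<and> a \<in> A then bstr m - {b} else bstr m))"
  defines "Z \<equiv> {(b, I, A). b \<in> bstr m \<and> I \<subseteq> {1..T} \<and> T \<le> 2 * card I \<and> A \<subseteq> bstr n \<and> card A = s}"
  shows "\<exists>G\<in>\<Omega>. G \<notin> (\<Union>z\<in>Z. S z)"
proof -
  define U where "U = T * 2 ^ n"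
  have N1: "N \<ge> 1" by (simp add: N_def)
  have finDom: "finite Dom" by (simp add: Dom_def finite_bstr)
  have cardDom: "card Dom = U" by (simp add: Dom_def U_def card_cartesian_product card_bstr)
  have cardO: "card \<Omega> = N ^ U"
    unfolding \<Omega>_def using finDom cardDom by (simp add: card_PiE card_bstr N_def)
  have finZ: "finite Z"
  proof -
    have "Z \<subseteq> bstr m \<times> Pow {1..T} \<times> Pow (bstr n)" by (auto simp: Z_def)
    moreover have "finite (bstr m \<times> Pow {1..T} \<times> Pow (bstr n))" by (simp add: finite_bstr)
    ultimately show ?thesis by (rule finite_subset)
  qed
  have cardZ: "card Z \<le> N * 2 ^ T * (2 ^ n) ^ s"
  proof -
    have "Z \<subseteq> bstr m \<times> Pow {1..T} \<times> {A. A \<subseteq> bstr n \<and> card A = s}" by (auto simp: Z_def)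
    hence "card Z \<le> card (bstr m \<times> Pow {1..T} \<times> {A. A \<subseteq> bstr n \<and> card A = s})"
      by (intro card_mono) (auto simp: finite_bstr)
    also have "\<dots> = N * 2 ^ T * (2 ^ n choose s)"
      by (simp add: card_cartesian_product card_bstr N_def n_subsets finite_bstr card_Pow)
    also have "\<dots> \<le> N * 2 ^ T * (2 ^ n) ^ s"
    proof (cases "s \<le> 2 ^ n")
      case True then show ?thesis using binomial_le_pow[OF True] by simp
    next
      case False then show ?thesis by (simp add: binomial_eq_0)
    qed
    finally show ?thesis .
  qed
  have cardS: "card (S z) * 2 ^ (4 * T) \<le> N ^ U" if "z \<in> Z" for z
  proof -
    obtain b I A where z: "z = (b, I, A)" by (cases z) auto
    have b: "b \<in> bstr m" and I: "I \<subseteq> {1..T}" "T \<le> 2 * card I" and A: "A \<subseteq> bstr n" "card A = s"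
      using that by (auto simp: Z_def z)
    have finI: "finite I" using I finite_subset by blast
    have finA: "finite A" using A finite_subset finite_bstr by blast
    define q where "q = card (I \<times> A)"
    have q: "q = card I * s" by (simp add: q_def card_cartesian_product A)
    have sub: "I \<times> A \<subseteq> Dom" using I A by (auto simp: Dom_def)
    have qU: "q \<le> U" unfolding q_def using card_mono[OF finDom sub] cardDom by simp
    have cb: "card (bstr m - {b}) = N - 1" using b by (simp add: card_bstr N_def finite_bstr)
    have "card (S z) = (\<Prod>x\<in>Dom. card ((\<lambda>(i,a). if i \<in> I \<and> a \<in> A then bstr m - {b} else bstr m) x))"
      unfolding S_def z using finDom by (simp add: card_PiE)
    also have "\<dots> = (\<Prod>x\<in>Dom. if x \<in> I \<times> A then N - 1 else N)"
      by (rule prod.cong) (auto simp: cb card_bstr N_def split: if_split_asm)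
    also have "\<dots> = (N - 1) ^ card (Dom \<inter> {x. x \<in> I \<times> A}) * N ^ card (Dom \<inter> - {x. x \<in> I \<times> A})"
      using prod.If_cases[OF finDom, of "\<lambda>x. x \<in> I \<times> A" "\<lambda>_. N - 1" "\<lambda>_. N"] by simp
    also have "Dom \<inter> {x. x \<in> I \<times> A} = I \<times> A" using sub by auto
    also have "card (Dom \<inter> - {x. x \<in> I \<times> A}) = U - q"
    proof -
      have "Dom \<inter> - {x. x \<in> I \<times> A} = Dom - I \<times> A" by auto
      thus ?thesis using card_Diff_subset[OF _ sub] finI finA cardDom q_def by simp
    qed
    finally have cS: "card (S z) = (N - 1) ^ q * N ^ (U - q)" by (simp add: q_def)
    define r where "r = 4 * T * N"
    have rq: "r \<le> q" using I(2) unfolding q r_def s_def by (simp add: mult.commute mult.left_commute)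
    have "(N - 1) ^ q * N ^ (U - q) = (N - 1) ^ r * ((N - 1) ^ (q - r) * N ^ (U - q))"
      using rq by (simp add: power_add[symmetric])
    also have "\<dots> \<le> (N - 1) ^ r * (N ^ (q - r) * N ^ (U - q))"
      by (intro mult_left_mono mult_right_mono power_mono) auto
    also have "\<dots> = (N - 1) ^ r * N ^ (U - r)"
      using rq qU by (simp add: power_add[symmetric])
    finally have 1: "card (S z) \<le> (N - 1) ^ r * N ^ (U - r)" using cS by simp
    have "(N - 1) ^ r * 2 ^ (4 * T) = (2 * (N - 1) ^ N) ^ (4 * T)"
      by (simp add: r_def power_mult_distrib power_mult[symmetric] mult.commute)
    also have "\<dots> \<le> (N ^ N) ^ (4 * T)" using two_pow_le[OF N1] by (rule power_mono) simp
    also have "\<dots> = N ^ r" by (simp add: r_def power_mult[symmetric] mult.commute)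
    finally have 2: "(N - 1) ^ r * 2 ^ (4 * T) \<le> N ^ r" .
    have "card (S z) * 2 ^ (4 * T) \<le> (N - 1) ^ r * N ^ (U - r) * 2 ^ (4 * T)"
      using 1 by simp
    also have "\<dots> = ((N - 1) ^ r * 2 ^ (4 * T)) * N ^ (U - r)" by simp
    also have "\<dots> \<le> N ^ r * N ^ (U - r)" using 2 by simp
    also have "\<dots> = N ^ U" using rq qU by (simp add: power_add[symmetric])
    finally show ?thesis .
  qed
  have "card (\<Union>z\<in>Z. S z) * 2 ^ (4 * T) \<le> (\<Sum>z\<in>Z. card (S z)) * 2 ^ (4 * T)"
    using card_UN_le[OF finZ] by simp
  also have "\<dots> = (\<Sum>z\<in>Z. card (S z) * 2 ^ (4 * T))" by (simp add: sum_distrib_right)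
  also have "\<dots> \<le> (\<Sum>z\<in>Z. N ^ U)" by (rule sum_mono) (rule cardS)
  also have "\<dots> = card Z * N ^ U" by simp
  also have "\<dots> \<le> N * 2 ^ T * (2 ^ n) ^ s * N ^ U" using cardZ by simp
  also have "\<dots> < 2 ^ (4 * T) * N ^ U"
  proof -
    have mlt: "m < N" unfolding N_def by (rule less_exp)
    have "n \<ge> 1" using m by simp
    hence "N \<le> n * N" by simp
    have e: "N * 2 ^ T * (2 ^ n) ^ s = 2 ^ (m + T + n * s)"
      by (simp add: N_def power_add power_mult)
    have h: "m < 4 * (n * N)" using mlt \<open>N \<le> n * N\<close> by linarith
    have "m + T + n * s < 4 * T" using h unfolding T_def s_def by (simp add: mult.commute)
    hence "(2::nat) ^ (m + T + n * s) < 2 ^ (4 * T)" by (rule power_strict_increasing) simp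
    moreover have "N ^ U > 0" using N1 by simp
    ultimately show ?thesis using e by simp
  qed
  finally have "card (\<Union>z\<in>Z. S z) < N ^ U" by simp
  hence "card (\<Union>z\<in>Z. S z) < card \<Omega>" using cardO by simp
  moreover have "finite (\<Union>z\<in>Z. S z)"
    using finZ finDom by (auto simp: S_def finite_bstr intro!: finite_PiE split: prod.splits)
  ultimately have "\<not> \<Omega> \<subseteq> (\<Union>z\<in>Z. S z)"
    using card_mono[of "\<Union>z\<in>Z. S z" \<Omega>] by linarith
  thus ?thesis by blast
qed

lemma key_count':
  fixes n m :: nat
  assumes m: "0 < m" "m \<le> n"
  obtains G where "\<forall>i\<in>{1..4 * n * 2 ^ m}. \<forall>a\<in>bstr n. G (i, a) \<in> bstr m"
    "\<And>b I A. b \<in> bstr m \<Longrightarrow> I \<subseteq> {1..4 * n * 2 ^ m} \<Longrightarrow> 4 * n * 2 ^ m \<le> 2 * card I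
       \<Longrightarrow> A \<subseteq> bstr n \<Longrightarrow> card A = 8 * 2 ^ m \<Longrightarrow> \<exists>i\<in>I. \<exists>a\<in>A. G (i, a) = b"
proof -
  from key_count[OF m] obtain G where
    G1: "G \<in> PiE ({1..4 * n * 2 ^ m} \<times> bstr n) (\<lambda>_. bstr m)" and
    G2: "G \<notin> (\<Union>z\<in>{(b, I, A). b \<in> bstr m \<and> I \<subseteq> {1..4 * n * 2 ^ m} \<and> 4 * n * 2 ^ m \<le> 2 * card I \<and> A \<subseteq> bstr n \<and> card A = 8 * 2 ^ m}.
      (\<lambda>(b, I, A). PiE ({1..4 * n * 2 ^ m} \<times> bstr n) (\<lambda>(i,a). if i \<in> I \<and> a \<in> A then bstr m - {b} else bstr m)) z)"
    by blast
  show ?thesis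
  proof (rule that)
    show "\<forall>i\<in>{1..4 * n * 2 ^ m}. \<forall>a\<in>bstr n. G (i, a) \<in> bstr m" using G1 by (auto simp: PiE_iff)
  next
    fix b I A assume b: "b \<in> bstr m" and I: "I \<subseteq> {1..4 * n * 2 ^ m}" "4 * n * 2 ^ m \<le> 2 * card I"
      and A: "A \<subseteq> bstr n" "card A = 8 * 2 ^ m"
    show "\<exists>i\<in>I. \<exists>a\<in>A. G (i, a) = b"
    proof (rule ccontr)
      assume nb: "\<not> ?thesis"
      have "G \<in> PiE ({1..4 * n * 2 ^ m} \<times> bstr n) (\<lambda>(i,a). if i \<in> I \<and> a \<in> A then bstr m - {b} else bstr m)"
        using G1 nb by (auto simp: PiE_iff)
      with G2 b I A show False by blast
    qed
  qed
qed

theorem mainTheorem5: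
  shows "\<exists>K k D :: real. K > 0 \<and> k > 0 \<and> D > 0 \<and>
    (\<forall>n m :: nat. 0 < m \<and> m \<le> n \<longrightarrow>
      (\<exists>(T :: nat) (F :: nat \<Rightarrow> bool list \<Rightarrow> bool list).
         real T \<le> K * 2 ^ m * real n powr k \<and>
         (\<forall>i\<in>{1..T}. \<forall>a\<in>bstr n. F i a \<in> bstr m) \<and>
         (\<forall>b\<in>bstr m. \<forall>I. I \<subseteq> {1..T} \<and> real (card I) \<ge> real T / 2 \<longrightarrow>
            real (card {a\<in>bstr n. \<forall>i\<in>I. F i a \<noteq> b}) \<le> D * 2 ^ m)))"
proof (rule exI[of _ "4::real"], rule exI[of _ "1::real"], rule exI[of _ "8::real"], intro conjI allI impI)
  fix n m :: nat assume nm: "0 < m \<and> m \<le> n"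
  hence m: "0 < m" "m \<le> n" by auto
  obtain G where G1: "\<forall>i\<in>{1..4 * n * 2 ^ m}. \<forall>a\<in>bstr n. G (i, a) \<in> bstr m"
    and G2: "\<And>b I A. b \<in> bstr m \<Longrightarrow> I \<subseteq> {1..4 * n * 2 ^ m} \<Longrightarrow> 4 * n * 2 ^ m \<le> 2 * card I
       \<Longrightarrow> A \<subseteq> bstr n \<Longrightarrow> card A = 8 * 2 ^ m \<Longrightarrow> \<exists>i\<in>I. \<exists>a\<in>A. G (i, a) = b"
    using key_count'[OF m] by metis
  define T where "T = 4 * n * 2 ^ m"
  show "\<exists>(T :: nat) (F :: nat \<Rightarrow> bool list \<Rightarrow> bool list).
         real T \<le> 4 * 2 ^ m * real n powr 1 \<and>
         (\<forall>i\<in>{1..T}. \<forall>a\<in>bstr n. F i a \<in> bstr m) \<and>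
         (\<forall>b\<in>bstr m. \<forall>I. I \<subseteq> {1..T} \<and> real (card I) \<ge> real T / 2 \<longrightarrow>
            real (card {a\<in>bstr n. \<forall>i\<in>I. F i a \<noteq> b}) \<le> 8 * 2 ^ m)"
  proof (intro exI[of _ T] exI[of _ "\<lambda>i a. G (i, a)"] conjI ballI allI impI)
    have "real T = 4 * 2 ^ m * real n" by (simp add: T_def)
    then show "real T \<le> 4 * 2 ^ m * real n powr 1" by simp
    show "\<And>i a. i \<in> {1..T} \<Longrightarrow> a \<in> bstr n \<Longrightarrow> G (i, a) \<in> bstr m" using G1 by (simp add: T_def)
    fix b I assume b: "b \<in> bstr m" and I: "I \<subseteq> {1..T} \<and> real T / 2 \<le> real (card I)"
    show "real (card {a\<in>bstr n. \<forall>i\<in>I. G (i, a) \<noteq> b}) \<le> 8 * 2 ^ m"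
    proof (rule ccontr)
      assume "\<not> ?thesis"
      hence "real (8 * 2 ^ m) \<le> real (card {a\<in>bstr n. \<forall>i\<in>I. G (i, a) \<noteq> b})" by simp
      hence "8 * 2 ^ m \<le> card {a\<in>bstr n. \<forall>i\<in>I. G (i, a) \<noteq> b}" by (simp only: of_nat_le_iff)
      then obtain A where A: "A \<subseteq> {a\<in>bstr n. \<forall>i\<in>I. G (i, a) \<noteq> b}" "card A = 8 * 2 ^ m"
        by (meson obtain_subset_with_card_n)
      have "T \<le> 2 * card I" using I by linarith
      have I1: "I \<subseteq> {1..4 * n * 2 ^ m}" using I by (simp add: T_def)
      have I2: "4 * n * 2 ^ m \<le> 2 * card I" using \<open>T \<le> 2 * card I\<close> by (simp add: T_def)
      have A1: "A \<subseteq> bstr n" using A(1) by auto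
      obtain i a where "i \<in> I" "a \<in> A" "G (i, a) = b" using G2[OF b I1 I2 A1 A(2)] by blast
      with A(1) show False by blast
    qed
  qed
qed (auto)

end
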